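(* Let $k$ be a field, $A$ a commutative $k$-algebra, $k_n=k[t]/(t^{n+1})$, and $B$ a $k_n$-algebra with an isomorphism $gr\,B\simeq A\otimes_kk_n$ such that $B$ induces a deformation of $D(A)$. Let $\tau:D(B)\to D(A)$ be the residue map and suppose there is a $k$-algebra homomorphism $s:D(A)\to D(B)$ with $\tau\circ s=\mathrm{id}$. Regard $B$ as a left $A\otimes_kk_n$-module via $a\cdot b=s(a)(b)$ for $a\in A\subset D(A)$ (and $t$ acting by multiplication). Then (i) the residue map $\beta:B\to B/tB=A$ is a homomorphism of left $A$-modules; (ii) $B$ is a free $A\otimes_kk_n$-module of rank $1$.
   Context: All differential operators are $k[t]$-linear. For a $k_n$-algebra $C$, $D(C)=\bigcup_mD^m(C)$ with $D^m(C)=\{d\in\operatorname{End}_{k_n}(C): [f_m,\dots,[f_0,d]\dots]=0\ \forall f_i\in C\}$ ($f$ acting by left multiplication, $[f,d]=fd-df$); $D(A)$ is the ring of $k$-linear differential operators on $A$, containing $A$ as left multiplications. $gr$ is taken for the $t$-adic filtration. The natural map $\gamma:gr\,D(B)\to\operatorname{End}_{k_n}(gr\,B)$ sends the class of $d\in t^iD(B)$ to the endomorphism $t^jB/t^{j+1}B\to t^{i+j}B/t^{i+j+1}B$ induced by $d$; it lands in $D(gr\,B)$. $B$ induces a deformation of $D(A)$ if $\gamma:gr\,D(B)\to D(gr\,B)$ is an isomorphism; then, as $D(gr\,B)\simeq D(A\otimes k_n)=D(A)\otimes k_n$, $D(B)$ is an $n$-th order deformation of $D(A)$, and $\tau$ is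 the composite $D(B)\to D(B)/tD(B)\simeq D(A)$ (each operator $d$ is sent to the operator it induces on $B/tB=A$). *)

theory Defs
  imports "HOL-Library.FuncSet"
begin

definition ring_hom_fun :: "('k::ring_1 \<Rightarrow> 'r::ring_1) \<Rightarrow> bool" where
  "ring_hom_fun f \<longleftrightarrow> f 1 = 1 \<and> (\<forall>x y. f (x + y) = f x + f y) \<and> (\<forall>x y. f (x * y) = f x * f y)"

text \<open>B is a k_n-algebra, k_n = k[t]/(t^(n+1)): a ring B with a ring hom k -> B into the
centre and a central element t with t^(n+1) = 0 (universal property of k[t]/(t^(n+1))).\<close>
definition kn_algebra :: "nat \<Rightarrow> ('k::field \<Rightarrow> 'b::ring_1) \<Rightarrow> 'b \<Rightarrow> bool" where
  "kn_algebra n iB t \<longleftrightarrow> ring_hom_fun iB \<and> (\<forall>c x. iB c * x = x * iB c)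
     \<and> (\<forall>x. t * x = x * t) \<and> t ^ Suc n = 0"

text \<open>k_n-linear endomorphisms of C: additive, commuting with the k-action sm and with
multiplication by the element tt (the image of t).\<close>
definition kn_endo :: "'c set \<Rightarrow> ('c \<Rightarrow> 'c \<Rightarrow> 'c) \<Rightarrow> ('c \<Rightarrow> 'c \<Rightarrow> 'c) \<Rightarrow> ('k \<Rightarrow> 'c \<Rightarrow> 'c)
    \<Rightarrow> 'c \<Rightarrow> ('c \<Rightarrow> 'c) set" where
  "kn_endo C add mul sm tt = {d. d \<in> extensional C \<and> (\<forall>x\<in>C. d x \<in> C)
     \<and> (\<forall>x\<in>C. \<forall>y\<in>C. d (add x y) = add (d x) (d y))
     \<and> (\<forall>c. \<forall>x\<in>C. d (sm c x) = sm c (d x))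
     \<and> (\<forall>x\<in>C. d (mul tt x) = mul tt (d x))}"

definition commut :: "('c \<Rightarrow> 'c \<Rightarrow> 'c) \<Rightarrow> ('c \<Rightarrow> 'c \<Rightarrow> 'c) \<Rightarrow> 'c \<Rightarrow> ('c \<Rightarrow> 'c) \<Rightarrow> ('c \<Rightarrow> 'c)" where
  "commut sub mul f d = (\<lambda>x. sub (mul f (d x)) (d (mul f x)))"

fun itcommut :: "('c \<Rightarrow> 'c \<Rightarrow> 'c) \<Rightarrow> ('c \<Rightarrow> 'c \<Rightarrow> 'c) \<Rightarrow> 'c list \<Rightarrow> ('c \<Rightarrow> 'c) \<Rightarrow> ('c \<Rightarrow> 'c)" where
  "itcommut sub mul [] d = d"
| "itcommut sub mul (f # fs) d = itcommut sub mul fs (commut sub mul f d)"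

definition diffops_ord :: "nat \<Rightarrow> 'c set \<Rightarrow> ('c \<Rightarrow> 'c \<Rightarrow> 'c) \<Rightarrow> ('c \<Rightarrow> 'c \<Rightarrow> 'c)
    \<Rightarrow> ('c \<Rightarrow> 'c \<Rightarrow> 'c) \<Rightarrow> 'c \<Rightarrow> ('k \<Rightarrow> 'c \<Rightarrow> 'c) \<Rightarrow> 'c \<Rightarrow> ('c \<Rightarrow> 'c) set" where
  "diffops_ord m C add sub mul z sm tt = {d \<in> kn_endo C add mul sm tt.
     \<forall>fs. length fs = Suc m \<longrightarrow> set fs \<subseteq> C \<longrightarrow> (\<forall>x\<in>C. itcommut sub mul fs d x = z)}"

definition diffops :: "'c set \<Rightarrow> ('c \<Rightarrow> 'c \<Rightarrow> 'c) \<Rightarrow> ('c \<Rightarrow> 'c \<Rightarrow> 'c)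
    \<Rightarrow> ('c \<Rightarrow> 'c \<Rightarrow> 'c) \<Rightarrow> 'c \<Rightarrow> ('k \<Rightarrow> 'c \<Rightarrow> 'c) \<Rightarrow> 'c \<Rightarrow> ('c \<Rightarrow> 'c) set" where
  "diffops C add sub mul z sm tt = (\<Union>m. diffops_ord m C add sub mul z sm tt)"

text \<open>D(A): k-linear differential operators on the commutative k-algebra A
(t := 1 makes the t-linearity condition vacuous).\<close>
definition DA :: "('k \<Rightarrow> 'a::comm_ring_1) \<Rightarrow> ('a \<Rightarrow> 'a) set" where
  "DA iA = diffops UNIV (+) (-) (*) 0 (\<lambda>c x. iA c * x) 1"

definition DB :: "('k \<Rightarrow> 'b::ring_1) \<Rightarrow> 'b \<Rightarrow> ('b \<Rightarrow> 'b) set" where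
  "DB iB t = diffops UNIV (+) (-) (*) 0 (\<lambda>c x. iB c * x) t"

definition tpow_ideal :: "'b::ring_1 \<Rightarrow> nat \<Rightarrow> 'b set" where
  "tpow_ideal t i = range (\<lambda>x. t ^ i * x)"

text \<open>class of x in t^j B / t^(j+1) B\<close>
definition coset :: "'b::ring_1 \<Rightarrow> nat \<Rightarrow> 'b \<Rightarrow> 'b set" where
  "coset t j x = (\<lambda>y. x + y) ` tpow_ideal t (Suc j)"

definition gr_piece :: "'b::ring_1 \<Rightarrow> nat \<Rightarrow> 'b set set" where
  "gr_piece t j = coset t j ` tpow_ideal t j"

text \<open>gr B = direct sum of the pieces (pieces of degree > n are zero since t^(n+1)=0).\<close>
definition grB :: "'b::ring_1 \<Rightarrow> (nat \<Rightarrow> 'b set) set" where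
  "grB t = {g. \<forall>j. g j \<in> gr_piece t j}"

definition rep :: "'b set \<Rightarrow> 'b" where
  "rep X = (SOME x. x \<in> X)"

definition gr_add :: "'b::ring_1 \<Rightarrow> (nat \<Rightarrow> 'b set) \<Rightarrow> (nat \<Rightarrow> 'b set) \<Rightarrow> (nat \<Rightarrow> 'b set)" where
  "gr_add t g h = (\<lambda>j. coset t j (rep (g j) + rep (h j)))"

definition gr_sub :: "'b::ring_1 \<Rightarrow> (nat \<Rightarrow> 'b set) \<Rightarrow> (nat \<Rightarrow> 'b set) \<Rightarrow> (nat \<Rightarrow> 'b set)" where
  "gr_sub t g h = (\<lambda>j. coset t j (rep (g j) - rep (h j)))"

definition gr_mul :: "'b::ring_1 \<Rightarrow> (nat \<Rightarrow> 'b set) \<Rightarrow> (nat \<Rightarrow> 'b set) \<Rightarrow> (nat \<Rightarrow> 'b set)" where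
  "gr_mul t g h = (\<lambda>j. coset t j (\<Sum>p\<le>j. rep (g p) * rep (h (j - p))))"

definition gr_zero :: "'b::ring_1 \<Rightarrow> (nat \<Rightarrow> 'b set)" where
  "gr_zero t = (\<lambda>j. coset t j 0)"

definition gr_one :: "'b::ring_1 \<Rightarrow> (nat \<Rightarrow> 'b set)" where
  "gr_one t = (\<lambda>j. if j = 0 then coset t 0 1 else coset t j 0)"

definition gr_sm :: "('k \<Rightarrow> 'b::ring_1) \<Rightarrow> 'b \<Rightarrow> 'k \<Rightarrow> (nat \<Rightarrow> 'b set) \<Rightarrow> (nat \<Rightarrow> 'b set)" where
  "gr_sm iB t c g = (\<lambda>j. coset t j (iB c * rep (g j)))"

definition gr_t :: "'b::ring_1 \<Rightarrow> (nat \<Rightarrow> 'b set)" where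
  "gr_t t = (\<lambda>j. if j = 1 then coset t 1 t else coset t j 0)"

definition DgrB :: "('k \<Rightarrow> 'b::ring_1) \<Rightarrow> 'b \<Rightarrow> ((nat \<Rightarrow> 'b set) \<Rightarrow> (nat \<Rightarrow> 'b set)) set" where
  "DgrB iB t = diffops (grB t) (gr_add t) (gr_sub t) (gr_mul t) (gr_zero t) (gr_sm iB t) (gr_t t)"

definition tDB :: "('k \<Rightarrow> 'b::ring_1) \<Rightarrow> 'b \<Rightarrow> nat \<Rightarrow> ('b \<Rightarrow> 'b) set" where
  "tDB iB t i = {(\<lambda>x. t ^ i * d x) | d. d \<in> DB iB t}"

definition gamma :: "'b::ring_1 \<Rightarrow> nat \<Rightarrow> ('b \<Rightarrow> 'b) \<Rightarrow> (nat \<Rightarrow> 'b set) \<Rightarrow> (nat \<Rightarrow> 'b set)" where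
  "gamma t i d = restrict (\<lambda>g. \<lambda>j. if j < i then coset t j 0 else coset t j (d (rep (g (j - i))))) (grB t)"

text \<open>gamma on an element (class of d_0,...,d_n) of gr D(B), with d_i in t^i D(B).\<close>
definition Gamma :: "nat \<Rightarrow> 'b::ring_1 \<Rightarrow> (nat \<Rightarrow> 'b \<Rightarrow> 'b) \<Rightarrow> (nat \<Rightarrow> 'b set) \<Rightarrow> (nat \<Rightarrow> 'b set)" where
  "Gamma n t ds = restrict (\<lambda>g. foldr (\<lambda>i acc. gr_add t (gamma t i (ds i) g) acc) [0..<Suc n] (gr_zero t)) (grB t)"

text \<open>B induces a deformation of D(A): gamma : gr D(B) -> D(gr B) is well defined into D(gr B)
and bijective (injective on the quotient gr D(B), and surjective).\<close>
definition induces_deformation :: "nat \<Rightarrow> ('k \<Rightarrow> 'b::ring_1) \<Rightarrow> 'b \<Rightarrow> bool" where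
  "induces_deformation n iB t \<longleftrightarrow>
     (\<forall>ds. (\<forall>i\<le>n. ds i \<in> tDB iB t i) \<longrightarrow> Gamma n t ds \<in> DgrB iB t)
   \<and> (\<forall>ds ds'. (\<forall>i\<le>n. ds i \<in> tDB iB t i) \<longrightarrow> (\<forall>i\<le>n. ds' i \<in> tDB iB t i) \<longrightarrow>
        Gamma n t ds = Gamma n t ds' \<longrightarrow> (\<forall>i\<le>n. (\<lambda>x. ds i x - ds' i x) \<in> tDB iB t (Suc i)))
   \<and> (\<forall>E\<in>DgrB iB t. \<exists>ds. (\<forall>i\<le>n. ds i \<in> tDB iB t i) \<and> Gamma n t ds = E)"

section \<open>A \<otimes>_k k_n = A[t]/(t^(n+1)), elements as coefficient sequences\<close>

definition akn :: "nat \<Rightarrow> (nat \<Rightarrow> 'a::comm_ring_1) set" where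
  "akn n = {p. \<forall>j>n. p j = 0}"

definition ak_add :: "(nat \<Rightarrow> 'a::comm_ring_1) \<Rightarrow> (nat \<Rightarrow> 'a) \<Rightarrow> (nat \<Rightarrow> 'a)" where
  "ak_add p q = (\<lambda>j. p j + q j)"

definition ak_mul :: "nat \<Rightarrow> (nat \<Rightarrow> 'a::comm_ring_1) \<Rightarrow> (nat \<Rightarrow> 'a) \<Rightarrow> (nat \<Rightarrow> 'a)" where
  "ak_mul n p q = (\<lambda>j. if j \<le> n then (\<Sum>i\<le>j. p i * q (j - i)) else 0)"

definition ak_one :: "nat \<Rightarrow> 'a::comm_ring_1" where
  "ak_one = (\<lambda>j. if j = 0 then 1 else 0)"

definition ak_t :: "nat \<Rightarrow> nat \<Rightarrow> 'a::comm_ring_1" where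
  "ak_t n = (\<lambda>j. if j = 1 \<and> 1 \<le> n then 1 else 0)"

definition ak_sm :: "('k \<Rightarrow> 'a::comm_ring_1) \<Rightarrow> 'k \<Rightarrow> (nat \<Rightarrow> 'a) \<Rightarrow> (nat \<Rightarrow> 'a)" where
  "ak_sm iA c p = (\<lambda>j. iA c * p j)"

definition gr_iso :: "nat \<Rightarrow> ('k \<Rightarrow> 'a::comm_ring_1) \<Rightarrow> ('k \<Rightarrow> 'b::ring_1) \<Rightarrow> 'b
    \<Rightarrow> ((nat \<Rightarrow> 'b set) \<Rightarrow> (nat \<Rightarrow> 'a)) \<Rightarrow> bool" where
  "gr_iso n iA iB t theta \<longleftrightarrow> bij_betw theta (grB t) (akn n)
     \<and> (\<forall>g\<in>grB t. \<forall>h\<in>grB t. theta (gr_add t g h) = ak_add (theta g) (theta h)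
                          \<and> theta (gr_mul t g h) = ak_mul n (theta g) (theta h))
     \<and> theta (gr_one t) = ak_one
     \<and> theta (gr_t t) = ak_t n
     \<and> (\<forall>c. \<forall>g\<in>grB t. theta (gr_sm iB t c g) = ak_sm iA c (theta g))"

text \<open>beta : B -> B/tB = gr_0 B = (gr B)/t(gr B) = A, the identification induced by theta.\<close>
definition residue :: "'b::ring_1 \<Rightarrow> ((nat \<Rightarrow> 'b set) \<Rightarrow> (nat \<Rightarrow> 'a)) \<Rightarrow> 'b \<Rightarrow> 'a" where
  "residue t theta b = theta (\<lambda>j. if j = 0 then coset t 0 b else coset t j 0) 0"

text \<open>tau : D(B) -> D(A), d goes to the operator it induces on B/tB = A.\<close>
definition tau :: "'b::ring_1 \<Rightarrow> ((nat \<Rightarrow> 'b set) \<Rightarrow> (nat \<Rightarrow> 'a)) \<Rightarrow> ('b \<Rightarrow> 'b) \<Rightarrow> ('a \<Rightarrow> 'a)" where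
  "tau t theta d = (\<lambda>a. residue t theta (d (SOME b. residue t theta b = a)))"

text \<open>s : D(A) -> D(B) a k-algebra homomorphism (composition as product).\<close>
definition kalg_hom :: "('k \<Rightarrow> 'a::comm_ring_1) \<Rightarrow> ('k \<Rightarrow> 'b::ring_1) \<Rightarrow> 'b
    \<Rightarrow> (('a \<Rightarrow> 'a) \<Rightarrow> ('b \<Rightarrow> 'b)) \<Rightarrow> bool" where
  "kalg_hom iA iB t s \<longleftrightarrow> (\<forall>d\<in>DA iA. s d \<in> DB iB t)
     \<and> (\<forall>d1\<in>DA iA. \<forall>d2\<in>DA iA. s (d1 \<circ> d2) = s d1 \<circ> s d2
                            \<and> s (\<lambda>x. d1 x + d2 x) = (\<lambda>x. s d1 x + s d2 x))
     \<and> s id = id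
     \<and> (\<forall>c. \<forall>d\<in>DA iA. s (\<lambda>x. iA c * d x) = (\<lambda>x. iB c * s d x))"

definition bmod :: "nat \<Rightarrow> 'b::ring_1 \<Rightarrow> (('a::comm_ring_1 \<Rightarrow> 'a) \<Rightarrow> ('b \<Rightarrow> 'b))
    \<Rightarrow> (nat \<Rightarrow> 'a) \<Rightarrow> 'b \<Rightarrow> 'b" where
  "bmod n t s p b = (\<Sum>j\<le>n. t ^ j * s (\<lambda>x. p j * x) b)"

end

theory Submission
  imports Defs
begin


lemma tpow_comm:
  fixes t :: "'b::ring_1"
  assumes C: "\<forall>x. t*x = x*t" shows "t^j * x = x * t^j"
proof (induction j)
  case 0 then show ?case by simp
next
  case (Suc j)
  have "t^Suc j * x = t*(t^j*x)" by (simp add: mult.assoc)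
  also have "\<dots> = t*(x*t^j)" using Suc by simp
  also have "\<dots> = (x*t)*t^j" using C by (simp add: mult.assoc[symmetric])
  also have "\<dots> = x * t^Suc j" by (simp add: mult.assoc)
  finally show ?case .
qed

lemma I_def': "x \<in> tpow_ideal t j \<longleftrightarrow> (\<exists>y. x = t^j * y)"
  unfolding tpow_ideal_def by auto

lemma I_mem: "t^j * y \<in> tpow_ideal t j" unfolding I_def' by blast

lemma I_zero: "(0::'b::ring_1) \<in> tpow_ideal t j" unfolding I_def' by (rule exI[of _ 0]) simp

lemma I_add: "x \<in> tpow_ideal t j \<Longrightarrow> y \<in> tpow_ideal t j \<Longrightarrow> (x::'b::ring_1) + y \<in> tpow_ideal t j"
  unfolding I_def' by (metis distrib_left)

lemma I_diff: "x \<in> tpow_ideal t j \<Longrightarrow> y \<in> tpow_ideal t j \<Longrightarrow> (x::'b::ring_1) - y \<in> tpow_ideal t j"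
  unfolding I_def' by (metis right_diff_distrib)

lemma I_Suc: "x \<in> tpow_ideal t (Suc j) \<Longrightarrow> (x::'b::ring_1) \<in> tpow_ideal t j"
  unfolding I_def' by (metis mult.assoc power_Suc2)

lemma I_le: "i \<le> j \<Longrightarrow> x \<in> tpow_ideal t j \<Longrightarrow> (x::'b::ring_1) \<in> tpow_ideal t i"
proof (induction j)
  case 0 then show ?case by simp
next
  case (Suc j) then show ?case using I_Suc le_Suc_eq by blast
qed

lemma I_multR: "x \<in> tpow_ideal t j \<Longrightarrow> (x::'b::ring_1) * z \<in> tpow_ideal t j"
  unfolding I_def' by (auto simp: mult.assoc)

lemma I_multL:
  assumes C: "\<forall>x. t*x = x*(t::'b::ring_1)"
  shows "x \<in> tpow_ideal t j \<Longrightarrow> z * x \<in> tpow_ideal t j"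
  unfolding I_def' using tpow_comm[OF C] by (metis mult.assoc)

lemma I_mult:
  assumes C: "\<forall>x. t*x = x*(t::'b::ring_1)"
  shows "x \<in> tpow_ideal t i \<Longrightarrow> y \<in> tpow_ideal t j \<Longrightarrow> x * y \<in> tpow_ideal t (i+j)"
proof -
  assume "x \<in> tpow_ideal t i" "y \<in> tpow_ideal t j"
  then obtain a b where "x = t^i*a" "y = t^j*b" unfolding I_def' by blast
  then have "x*y = t^i*(a*t^j)*b" by (simp add: mult.assoc)
  also have "\<dots> = t^i*(t^j*a)*b" using tpow_comm[OF C, of j a] by simp
  also have "\<dots> = t^(i+j)*(a*b)" by (simp add: mult.assoc power_add)
  finally show ?thesis using I_mem by metis
qed

lemma I_sum: "(\<And>a. a \<in> A \<Longrightarrow> f a \<in> tpow_ideal t j) \<Longrightarrow> (sum f A :: 'b::ring_1) \<in> tpow_ideal t j"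
proof (induction A rule: infinite_finite_induct)
  case (infinite A) then show ?case using I_zero by simp
next
  case empty then show ?case using I_zero by simp
next
  case (insert x F) then show ?case by (simp add: I_add)
qed

lemma coset_in: "(x::'b::ring_1) \<in> coset t j x"
  unfolding coset_def using I_zero[of t "Suc j"] by force

lemma coset_sub: "a - b \<in> tpow_ideal t (Suc j) \<Longrightarrow> coset t j a \<subseteq> coset t j (b::'b::ring_1)"
proof
  fix w assume that: "a - b \<in> tpow_ideal t (Suc j)" and "w \<in> coset t j a"
  then obtain z where z: "z \<in> tpow_ideal t (Suc j)" "w = a + z" unfolding coset_def by auto
  have "w = b + ((a - b) + z)" using z by simp
  moreover have "(a - b) + z \<in> tpow_ideal t (Suc j)" using I_add that z by blast
  ultimately show "w \<in> coset t j b" unfolding coset_def by blast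
qed

lemma coset_eq: "coset t j x = coset t j (y::'b::ring_1) \<longleftrightarrow> x - y \<in> tpow_ideal t (Suc j)"
proof
  assume "coset t j x = coset t j y"
  then have "x \<in> coset t j y" using coset_in by metis
  then obtain z where "z \<in> tpow_ideal t (Suc j)" "x = y + z" unfolding coset_def by auto
  then show "x - y \<in> tpow_ideal t (Suc j)" by simp
next
  assume d: "x - y \<in> tpow_ideal t (Suc j)"
  moreover have "y - x \<in> tpow_ideal t (Suc j)" using I_diff[OF I_zero d] by simp
  ultimately show "coset t j x = coset t j y" using coset_sub by blast
qed

lemma rep_coset: "rep (coset t j x) - (x::'b::ring_1) \<in> tpow_ideal t (Suc j)"
proof -
  have "rep (coset t j x) \<in> coset t j x" unfolding rep_def by (rule someI, rule coset_in)
  then obtain z where "z \<in> tpow_ideal t (Suc j)" "rep (coset t j x) = x + z" unfolding coset_def by auto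
  then show ?thesis by simp
qed

lemma rep_grB: "g \<in> grB t \<Longrightarrow> rep (g j) \<in> tpow_ideal t j"
proof -
  assume "g \<in> grB t"
  then have "g j \<in> gr_piece t j" unfolding grB_def by blast
  then obtain y where y: "y \<in> tpow_ideal t j" "g j = coset t j y" unfolding gr_piece_def by auto
  have "rep (g j) = (rep (g j) - y) + y" by simp
  moreover have "rep (g j) - y \<in> tpow_ideal t j" using rep_coset[of t j y] y I_Suc by metis
  ultimately show ?thesis using I_add y(1) by metis
qed

definition hom :: "'b::ring_1 \<Rightarrow> nat \<Rightarrow> 'b \<Rightarrow> (nat \<Rightarrow> 'b set)" where
  "hom t j x = (\<lambda>i. if i = j then coset t j x else coset t i 0)"

lemma hom_grB: "x \<in> tpow_ideal t j \<Longrightarrow> hom t j x \<in> grB t"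
  unfolding grB_def hom_def gr_piece_def using I_zero by auto

lemma hom_add: "gr_add t (hom t j x) (hom t j y) = hom t j (x+y)"
proof
  fix i
  show "gr_add t (hom t j x) (hom t j y) i = hom t j (x+y) i"
  proof (cases "i = j")
    case True
    have "rep (coset t j x) + rep (coset t j y) - (x+y) = (rep (coset t j x) - x) + (rep (coset t j y) - y)"
      by simp
    then have "rep (coset t j x) + rep (coset t j y) - (x+y) \<in> tpow_ideal t (Suc j)"
      using I_add[OF rep_coset[of t j x] rep_coset[of t j y]] by metis
    then show ?thesis using True
      by (simp add: gr_add_def hom_def coset_eq)
  next
    case False
    have "rep (coset t i 0) + rep (coset t i 0) - 0 = (rep (coset t i 0) - 0) + (rep (coset t i 0) - 0)"
      by simp
    then have "rep (coset t i 0) + rep (coset t i 0) - 0 \<in> tpow_ideal t (Suc i)"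
      using I_add[OF rep_coset[of t i 0] rep_coset[of t i 0]] by metis
    then show ?thesis using False
      by (simp add: gr_add_def hom_def coset_eq)
  qed
qed

lemma hom_zero: "hom t j 0 = hom t 0 (0::'b::ring_1)"
  unfolding hom_def by (auto simp: fun_eq_iff)

lemma hom_eq: "x - y \<in> tpow_ideal t (Suc j) \<Longrightarrow> hom t j x = hom t j (y::'b::ring_1)"
  unfolding hom_def using coset_eq by metis




lemma rep_hom_other: "i \<noteq> j \<Longrightarrow> rep (hom t j x i) \<in> tpow_ideal t (Suc i)"
  unfolding hom_def using rep_coset[of t i 0] by simp

lemma rep_hom_same: "rep (hom t j x j) - x \<in> tpow_ideal t (Suc j)"
  unfolding hom_def using rep_coset[of t j x] by simp

lemma gr_mul_grB:
  assumes C: "\<forall>x. t*x = x*(t::'b::ring_1)"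
  assumes g: "g \<in> grB t" and h: "h \<in> grB t"
  shows "gr_mul t g h \<in> grB t"
proof -
  have "(\<Sum>p\<le>j. rep (g p) * rep (h (j - p))) \<in> tpow_ideal t j" for j
  proof (rule I_sum)
    fix p assume "p \<in> {..j}"
    then have "p + (j - p) = j" by simp
    then show "rep (g p) * rep (h (j - p)) \<in> tpow_ideal t j"
      using I_mult[OF C rep_grB[OF g] rep_grB[OF h]] by metis
  qed
  then show ?thesis unfolding grB_def gr_piece_def gr_mul_def by blast
qed

lemma hom_mul:
  assumes C: "\<forall>x. t*x = x*(t::'b::ring_1)"
  assumes x: "x \<in> tpow_ideal t i" and y: "y \<in> tpow_ideal t j"
  shows "gr_mul t (hom t i x) (hom t j y) = hom t (i+j) (x*y)"
proof
  fix m
  define a where "a p = rep (hom t i x p)" for p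
  define b where "b q = rep (hom t j y q)" for q
  have aI: "a p \<in> tpow_ideal t p" for p unfolding a_def using rep_grB[OF hom_grB[OF x]] .
  have bI: "b p \<in> tpow_ideal t p" for p unfolding b_def using rep_grB[OF hom_grB[OF y]] .
  have T: "a p * b (m - p) \<in> tpow_ideal t (Suc m)" if "p \<le> m" "p \<noteq> i \<or> m - p \<noteq> j" for p
  proof (cases "p = i")
    case False
    then have "a p \<in> tpow_ideal t (Suc p)" unfolding a_def using rep_hom_other by metis
    moreover have "Suc p + (m - p) = Suc m" using that by simp
    ultimately show ?thesis using I_mult[OF C _ bI] by metis
  next
    case True
    then have "m - p \<noteq> j" using that by simp
    then have "b (m - p) \<in> tpow_ideal t (Suc (m - p))" unfolding b_def using rep_hom_other by metis
    moreover have "p + Suc (m - p) = Suc m" using that by simp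
    ultimately show ?thesis using I_mult[OF C aI] by metis
  qed
  have lhs: "gr_mul t (hom t i x) (hom t j y) m = coset t m (\<Sum>p\<le>m. a p * b (m - p))"
    unfolding gr_mul_def a_def b_def by simp
  show "gr_mul t (hom t i x) (hom t j y) m = hom t (i+j) (x*y) m"
  proof (cases "m = i + j")
    case False
    have "(\<Sum>p\<le>m. a p * b (m - p)) \<in> tpow_ideal t (Suc m)"
    proof (rule I_sum)
      fix p assume "p \<in> {..m}"
      then have "p \<le> m" "p \<noteq> i \<or> m - p \<noteq> j" using False by auto
      then show "a p * b (m - p) \<in> tpow_ideal t (Suc m)" by (rule T)
    qed
    then show ?thesis unfolding lhs using False by (simp add: hom_def coset_eq)
  next
    case True
    have im: "i \<in> {..m}" using True by simp
    have S: "(\<Sum>p\<le>m. a p * b (m - p)) = a i * b (m - i) + (\<Sum>p\<in>{..m} - {i}. a p * b (m - p))"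
      using sum.remove[OF _ im] by simp
    have R: "(\<Sum>p\<in>{..m} - {i}. a p * b (m - p)) \<in> tpow_ideal t (Suc m)"
      by (rule I_sum) (use T in auto)
    define u where "u = a i - x"
    have u: "u \<in> tpow_ideal t (Suc i)" "a i = x + u"
      using rep_hom_same[of t i x] unfolding u_def a_def by simp_all
    define v where "v = b j - y"
    have v: "v \<in> tpow_ideal t (Suc j)" "b j = y + v"
      using rep_hom_same[of t j y] unfolding v_def b_def by simp_all
    have mi: "m - i = j" using True by simp
    have e: "a i * b (m - i) - x * y = u * (y + v) + x * v"
      unfolding mi u(2) v(2) by (simp add: algebra_simps)
    have "y + v \<in> tpow_ideal t j" using I_add[OF y I_Suc[OF v(1)]] .
    then have "u * (y + v) \<in> tpow_ideal t (Suc m)" using I_mult[OF C u(1)] True by (metis add_Suc)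
    moreover have "x * v \<in> tpow_ideal t (Suc m)" using I_mult[OF C x v(1)] True by (metis add_Suc_right)
    ultimately have "a i * b (m - i) - x * y \<in> tpow_ideal t (Suc m)" unfolding e using I_add by blast
    then have "(\<Sum>p\<le>m. a p * b (m - p)) - x * y \<in> tpow_ideal t (Suc m)"
      unfolding S using I_add[OF _ R] by (metis add_diff_eq diff_add_eq)
    then show ?thesis unfolding lhs using True by (simp add: hom_def coset_eq)
  qed
qed




lemma ak_t_mul: "ak_mul n (ak_t n) p = (\<lambda>j. if 1 \<le> j \<and> j \<le> n then p (j - 1) else 0)"
proof
  fix j
  show "ak_mul n (ak_t n) p j = (if 1 \<le> j \<and> j \<le> n then p (j - 1) else 0)"
  proof (cases "j \<le> n")
    case True
    have "(\<Sum>i\<le>j. ak_t n i * p (j - i)) = (\<Sum>i\<le>j. if i = 1 then p (j - 1) else 0)"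
      by (rule sum.cong) (use True in \<open>auto simp: ak_t_def\<close>)
    also have "\<dots> = (if 1 \<le> j then p (j - 1) else 0)" by (simp add: sum.delta)
    finally show ?thesis using True by (simp add: ak_mul_def)
  next
    case False then show ?thesis by (simp add: ak_mul_def)
  qed
qed

lemma mult_DA: "(\<lambda>x. (a::'a::comm_ring_1) * x) \<in> DA iA"
proof -
  have "(\<lambda>x. a * x) \<in> diffops_ord 0 UNIV (+) (-) (*) 0 (\<lambda>c x. iA c * x) (1::'a)"
    unfolding diffops_ord_def kn_endo_def
  proof (intro CollectI conjI ballI allI impI)
    fix fs :: "'a list" and x assume "length fs = Suc 0"
    then obtain f where "fs = [f]" by (auto simp: length_Suc_conv)
    then show "itcommut (-) (*) fs (\<lambda>x. a * x) x = 0" by (simp add: commut_def ac_simps)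
  qed (auto simp: extensional_def algebra_simps)
  then show ?thesis unfolding DA_def diffops_def by blast
qed

lemma DB_endo: "d \<in> DB iB t \<Longrightarrow> d (x + y) = d x + d y \<and> d (t * x) = t * d x"
  unfolding DB_def diffops_def diffops_ord_def kn_endo_def by blast

lemma I0: "x \<in> tpow_ideal t 0" unfolding I_def' by simp

lemma I1: "x \<in> tpow_ideal t (Suc 0) \<longleftrightarrow> (\<exists>y. x = t * y)" unfolding I_def' by simp




theorem lemma9p6:
  fixes n :: nat
    and iA :: "'k::field \<Rightarrow> 'a::comm_ring_1"
    and iB :: "'k \<Rightarrow> 'b::ring_1"
    and t :: 'b
    and theta :: "(nat \<Rightarrow> 'b set) \<Rightarrow> (nat \<Rightarrow> 'a)"
    and s :: "('a \<Rightarrow> 'a) \<Rightarrow> ('b \<Rightarrow> 'b)"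
  assumes A_alg: "ring_hom_fun iA"
    and B_alg: "kn_algebra n iB t"
    and iso: "gr_iso n iA iB t theta"
    and deform: "induces_deformation n iB t"
    and s_hom: "kalg_hom iA iB t s"
    and s_sect: "\<forall>d\<in>DA iA. tau t theta (s d) = d"
  shows "(\<forall>x y. residue t theta (x + y) = residue t theta x + residue t theta y)
       \<and> (\<forall>a b. residue t theta (s (\<lambda>x. a * x) b) = a * residue t theta b)
       \<and> (\<exists>e. bij_betw (\<lambda>p. bmod n t s p e) (akn n) UNIV)"
proof -
  have C: "\<forall>x. t*x = x*t" and tn: "t ^ Suc n = 0" using B_alg unfolding kn_algebra_def by auto
  have bij: "bij_betw theta (grB t) (akn n)" using iso unfolding gr_iso_def by blast
  have thadd: "theta (gr_add t g h) = ak_add (theta g) (theta h)" if "g \<in> grB t" "h \<in> grB t" for g h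
    using iso that unfolding gr_iso_def by blast
  have thmul: "theta (gr_mul t g h) = ak_mul n (theta g) (theta h)" if "g \<in> grB t" "h \<in> grB t" for g h
    using iso that unfolding gr_iso_def by blast
  have thone: "theta (gr_one t) = ak_one" using iso unfolding gr_iso_def by blast
  have tht: "theta (gr_t t) = ak_t n" using iso unfolding gr_iso_def by blast
  have inj: "inj_on theta (grB t)" and img: "theta ` grB t = akn n" using bij unfolding bij_betw_def by auto
  define R where "R = residue t theta"
  have R_def': "R x = theta (hom t 0 x) 0" for x unfolding R_def residue_def hom_def by simp
  have h0: "hom t 0 x \<in> grB t" for x using hom_grB[OF I0] .
  have grt: "gr_t t = hom t 1 t" unfolding gr_t_def hom_def by simp
  have grt_grB: "gr_t t \<in> grB t" unfolding grt by (rule hom_grB) (metis I_mem power_one_right mult_1_right)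
  have theta0: "theta (hom t 0 0) = (\<lambda>j. 0)"
  proof
    fix j
    have "theta (hom t 0 0) = ak_add (theta (hom t 0 0)) (theta (hom t 0 0))"
      using thadd[OF h0 h0, of 0 0] hom_add[of t 0 0 0] by simp
    then have "theta (hom t 0 0) j = theta (hom t 0 0) j + theta (hom t 0 0) j"
      unfolding ak_add_def by metis
    then show "theta (hom t 0 0) j = 0" by simp
  qed
  have R_add: "R (x + y) = R x + R y" for x y
    unfolding R_def' using thadd[OF h0 h0, of x y] hom_add[of t 0 x y] by (simp add: ak_add_def)
  have R_diff: "R (x - y) = R x - R y" for x y
    using R_add[of "x - y" y] by simp
  have R_t: "R (t * w) = 0" for w
  proof -
    have "hom t 0 (t * w) = hom t 0 0" by (rule hom_eq) (auto simp: I1)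
    then show ?thesis by (simp add: R_def' theta0)
  qed
  have R_ker: "x \<in> tpow_ideal t (Suc 0)" if Rx: "R x = 0" for x
  proof -
    define p where "p = theta (hom t 0 x)"
    have pA: "p \<in> akn n" unfolding p_def using img h0 by blast
    define q where "q = (\<lambda>j. p (Suc j))"
    have "q \<in> akn n" using pA unfolding q_def akn_def by auto
    then obtain h where hB: "h \<in> grB t" and hq: "theta h = q" using img by (metis imageE)
    have mB: "gr_mul t (gr_t t) h \<in> grB t" using gr_mul_grB[OF C grt_grB hB] .
    have "theta (gr_mul t (gr_t t) h) = p"
    proof
      fix j
      have p0: "p 0 = 0" using Rx unfolding R_def' p_def by simp
      have pn: "j > n \<Longrightarrow> p j = 0" using pA unfolding akn_def by auto
      show "theta (gr_mul t (gr_t t) h) j = p j"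
        unfolding thmul[OF grt_grB hB] tht hq ak_t_mul q_def
        using p0 pn by (cases j) auto
    qed
    then have "gr_mul t (gr_t t) h = hom t 0 x" using inj mB h0 unfolding p_def by (metis inj_on_def)
    then have "gr_mul t (gr_t t) h 0 = hom t 0 x 0" by simp
    then have "coset t 0 (rep (gr_t t 0) * rep (h 0)) = coset t 0 x"
      unfolding gr_mul_def hom_def by simp
    then have d: "rep (gr_t t 0) * rep (h 0) - x \<in> tpow_ideal t (Suc 0)" using coset_eq by metis
    have "rep (gr_t t 0) \<in> tpow_ideal t (Suc 0)" using rep_coset[of t 0 0] unfolding gr_t_def by simp
    then have m: "rep (gr_t t 0) * rep (h 0) \<in> tpow_ideal t (Suc 0)" by (rule I_multR)
    show ?thesis using I_diff[OF m d] by simp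
  qed
  have R1: "R 1 = 1"
  proof -
    have "hom t 0 1 = gr_one t" unfolding hom_def gr_one_def by simp
    then show ?thesis by (simp add: R_def' thone ak_one_def)
  qed
  have s_DB: "s (\<lambda>x. a * x) \<in> DB iB t" for a using s_hom mult_DA unfolding kalg_hom_def by blast
  have part2: "R (s (\<lambda>x. a * x) b) = a * R b" for a b
  proof -
    define d where "d = s (\<lambda>x. a * x)"
    have dadd: "d (x + y) = d x + d y" and dt: "d (t * x) = t * d x" for x y
      using DB_endo[OF s_DB] unfolding d_def by blast+
    define b0 where "b0 = (SOME b'. R b' = R b)"
    have Rb0: "R b0 = R b" unfolding b0_def by (rule someI) (rule refl)
    have "tau t theta d = (\<lambda>x. a * x)" using s_sect mult_DA unfolding d_def by blast
    then have "R (d b0) = a * R b" unfolding tau_def R_def b0_def by metis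
    moreover have "R (b - b0) = 0" using R_diff Rb0 by simp
    then obtain w where w: "b - b0 = t * w" using R_ker I1 by blast
    have "b = b0 + t * w" using w by (metis add.commute diff_add_cancel)
    then have "d b = d b0 + t * d w" using dadd dt by metis
    then have "R (d b) = R (d b0)" using R_add R_t by simp
    ultimately show ?thesis unfolding d_def by simp
  qed

  have sadd0: "\<forall>d1\<in>DA iA. \<forall>d2\<in>DA iA. s (\<lambda>x. d1 x + d2 x) = (\<lambda>x. s d1 x + s d2 x)"
    using s_hom unfolding kalg_hom_def by blast
  define S where "S a = s (\<lambda>x. a * x) 1" for a
  have S_add: "S (a + b) = S a + S b" for a b
  proof -
    have e: "(\<lambda>x. (a+b)*x) = (\<lambda>x. (\<lambda>x. a*x) x + (\<lambda>x. b*x) x)" by (simp add: distrib_right)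
    show ?thesis unfolding S_def e sadd0[rule_format, OF mult_DA mult_DA] by simp
  qed
  have S0: "S 0 = 0" using S_add[of 0 0] by simp
  have S_diff: "S (a - b) = S a - S b" for a b using S_add[of "a - b" b] by simp
  have RS: "R (S a) = a" for a unfolding S_def using part2[of a 1] R1 by simp
  define phi where "phi p = (\<Sum>j\<le>n. t^j * S (p j))" for p
  have bm: "bmod n t s p 1 = phi p" for p unfolding bmod_def phi_def S_def by simp
  have sur: "k \<le> Suc n \<Longrightarrow> \<exists>p\<in>akn n. (\<forall>j\<ge>k. p j = 0) \<and> b - phi p \<in> tpow_ideal t k" for k b
  proof (induction k arbitrary: b)
    case 0
    have "(\<lambda>j. 0::'a) \<in> akn n" by (simp add: akn_def)
    moreover have "phi (\<lambda>j. 0) = 0" unfolding phi_def S0 by simp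
    ultimately show ?case using I0 by force
  next
    case (Suc k)
    then have kn: "k \<le> n" by simp
    obtain p where pA: "p \<in> akn n" and pk: "\<forall>j\<ge>k. p j = 0" and pb: "b - phi p \<in> tpow_ideal t k"
      using Suc.IH[of b] Suc.prems by auto
    obtain c where c: "b - phi p = t^k * c" using pb unfolding I_def' by blast
    define a where "a = R c"
    have "R (c - S a) = 0" using R_diff RS unfolding a_def by simp
    then obtain c' where c': "c - S a = t * c'" using R_ker I1 by blast
    define p' where "p' = p(k := a)"
    have p'A: "p' \<in> akn n" using pA kn unfolding akn_def p'_def by auto
    have p'k: "\<forall>j\<ge>Suc k. p' j = 0" using pk unfolding p'_def by auto
    have "phi p' = (\<Sum>j\<le>n. t^j * S (p j) + (if j = k then t^k * S a else 0))"
      unfolding phi_def by (rule sum.cong) (use pk S0 in \<open>auto simp: p'_def\<close>)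
    also have "\<dots> = phi p + t^k * S a" using kn by (simp add: sum.distrib phi_def)
    finally have "b - phi p' = t^k * c - t^k * S a" using c by (simp add: algebra_simps)
    also have "\<dots> = t^k * (c - S a)" by (simp add: right_diff_distrib)
    also have "\<dots> = t^(Suc k) * c'" unfolding c' by (simp only: mult.assoc[symmetric] power_Suc2)
    finally have "b - phi p' \<in> tpow_ideal t (Suc k)" using I_mem by metis
    then show ?case using p'A p'k by blast
  qed
  have surj: "phi ` akn n = UNIV"
  proof (intro set_eqI iffI)
    fix b :: 'b
    obtain p where "p \<in> akn n" "b - phi p \<in> tpow_ideal t (Suc n)" using sur[of "Suc n" b] by auto
    then have "b = phi p" unfolding I_def' using tn by simp
    then show "b \<in> phi ` akn n" using \<open>p \<in> akn n\<close> by blast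
  qed simp
  have shift: "theta (hom t k (t^k * c)) j = (if k \<le> j \<and> j \<le> n then theta (hom t 0 c) (j - k) else 0)" for k j c
  proof (induction k arbitrary: j)
    case 0
    have "theta (hom t 0 c) \<in> akn n" using img h0 by blast
    then show ?case unfolding akn_def by auto
  next
    case (Suc k)
    have tI: "t \<in> tpow_ideal t 1" by (metis I_mem power_one_right mult_1_right)
    have "hom t (Suc k) (t^Suc k * c) = gr_mul t (hom t 1 t) (hom t k (t^k * c))"
      using hom_mul[OF C tI I_mem[of t k c]] by (simp add: mult.assoc)
    then have "theta (hom t (Suc k) (t^Suc k * c)) = ak_mul n (ak_t n) (theta (hom t k (t^k * c)))"
      using thmul[OF grt_grB hom_grB[OF I_mem[of t k c]]] tht grt by simp
    then show ?case unfolding ak_t_mul using Suc.IH by auto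
  qed
  have kill: "R c = 0" if "k \<le> n" "t^k * c = 0" for k c
    using shift[where k=k and j=k and c=c] that hom_zero[of t k] theta0 unfolding R_def' by simp
  have phi_diff: "phi (\<lambda>j. p j - q j) = phi p - phi q" for p q
    unfolding phi_def S_diff right_diff_distrib sum_subtractf by simp
  have zero: "r = (\<lambda>j. 0)" if rA: "r \<in> akn n" and r0: "phi r = 0" for r
  proof -
    have "k \<le> Suc n \<Longrightarrow> \<forall>j<k. r j = 0" for k
    proof (induction k)
      case 0 then show ?case by simp
    next
      case (Suc k)
      then have kn: "k \<le> n" and IH: "\<forall>j<k. r j = 0" by simp_all
      define X where "X j = S (r j)" for j
      have Xz: "j < k \<Longrightarrow> X j = 0" for j using IH S0 unfolding X_def by simp
      define c where "c = (\<Sum>j\<le>n. t^(j-k) * X j)"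
      define w where "w = (\<Sum>j\<le>n. if k < j then t^(j-k-1) * X j else 0)"
      have "t^k * c = (\<Sum>j\<le>n. t^k * (t^(j-k) * X j))" unfolding c_def by (simp add: sum_distrib_left)
      also have "\<dots> = phi r" unfolding phi_def
      proof (rule sum.cong)
        fix j assume "j \<in> {..n}"
        show "t^k * (t^(j-k) * X j) = t^j * S (r j)"
        proof (cases "j < k")
          case True then show ?thesis using Xz unfolding X_def by simp
        next
          case False
          then have "k + (j - k) = j" by simp
          then show ?thesis unfolding X_def by (metis mult.assoc power_add)
        qed
      qed simp
      finally have tc: "t^k * c = 0" using r0 by simp
      have "c = (\<Sum>j\<le>n. (if j = k then X k else 0) + t * (if k < j then t^(j-k-1) * X j else 0))"
        unfolding c_def
      proof (rule sum.cong)
        fix j assume "j \<in> {..n}"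
        show "t^(j-k) * X j = (if j = k then X k else 0) + t * (if k < j then t^(j-k-1) * X j else 0)"
        proof (cases "k < j")
          case True
          then have "j - k = Suc (j-k-1)" by simp
          then have "t^(j-k) = t * t^(j-k-1)" by (metis power_Suc)
          then show ?thesis using True by (simp add: mult.assoc)
        next
          case False then show ?thesis using Xz by (cases "j = k") auto
        qed
      qed simp
      also have "\<dots> = X k + t * w" using kn unfolding w_def by (simp add: sum.distrib sum_distrib_left)
      finally have "R c = R (X k)" using R_add R_t by simp
      also have "\<dots> = r k" unfolding X_def using RS by simp
      finally have "r k = 0" using kill[OF kn tc] by simp
      then show ?case using IH less_Suc_eq by auto
    qed
    from this[of "Suc n"] have "\<forall>j\<le>n. r j = 0" by auto
    then show ?thesis using rA unfolding akn_def by (auto simp: fun_eq_iff not_le[symmetric])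
  qed
  have injphi: "inj_on phi (akn n)"
  proof (rule inj_onI)
    fix p q assume pA: "p \<in> akn n" and qA: "q \<in> akn n" and e: "phi p = phi q"
    have "(\<lambda>j. p j - q j) \<in> akn n" using pA qA unfolding akn_def by auto
    moreover have "phi (\<lambda>j. p j - q j) = 0" using phi_diff e by simp
    ultimately have "(\<lambda>j. p j - q j) = (\<lambda>j. 0)" by (rule zero)
    then show "p = q" by (simp add: fun_eq_iff)
  qed
  have "bij_betw (\<lambda>p. bmod n t s p 1) (akn n) UNIV"
    unfolding bm bij_betw_def using injphi surj by simp
  then show ?thesis using R_add part2 unfolding R_def by blast
qed


end
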